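(* Let $n\ge1$, $k\in[n]$, and $f(S)=\min(|S|,k)$ for $S\subseteq[n]$. For every $x\in[0,1]$ and $\mathbf{x}=(x,\dots,x)\in[0,1]^n$, $f^{+}(\mathbf{x})/f^{++}(\mathbf{x})\le 4k/(4k-1)$ (with the convention $0/0=1$). Moreover, when $n$ is even, $k=n/2$ and $x=1/2$, equality $f^{+}(\mathbf{x})/f^{++}(\mathbf{x})=4k/(4k-1)$ holds.
   Context: $[n]=\{1,\dots,n\}$. For $f:2^{[n]}\to\mathbb{R}_+$ and $\mathbf{x}\in[0,1]^n$: the concave closure $f^{+}(\mathbf{x})=\max\sum_{S\subseteq[n]}\theta(S)f(S)$ over $\theta:2^{[n]}\to\mathbb{R}_{\ge0}$ with $\sum_S\theta(S)=1$ and $\sum_{S\ni i}\theta(S)=x_i$ for all $i$; the upper pairwise independent extension $f^{++}(\mathbf{x})$ is the same maximum with the additional constraints $\sum_{S\ni i,j}\theta(S)=x_ix_j$ for all $i<j$. *)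

theory Defs
  imports Complex_Main
begin

definition marg_feasible :: "nat \<Rightarrow> (nat \<Rightarrow> real) \<Rightarrow> (nat set \<Rightarrow> real) \<Rightarrow> bool" where
  "marg_feasible n x \<theta> \<longleftrightarrow>
     (\<forall>S\<in>Pow {1..n}. \<theta> S \<ge> 0) \<and>
     (\<Sum>S\<in>Pow {1..n}. \<theta> S) = 1 \<and>
     (\<forall>i\<in>{1..n}. (\<Sum>S\<in>{S\<in>Pow {1..n}. i \<in> S}. \<theta> S) = x i)"

definition pw_feasible :: "nat \<Rightarrow> (nat \<Rightarrow> real) \<Rightarrow> (nat set \<Rightarrow> real) \<Rightarrow> bool" where
  "pw_feasible n x \<theta> \<longleftrightarrow> marg_feasible n x \<theta> \<and>
     (\<forall>i\<in>{1..n}. \<forall>j\<in>{1..n}. i < j \<longrightarrow>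
        (\<Sum>S\<in>{S\<in>Pow {1..n}. i \<in> S \<and> j \<in> S}. \<theta> S) = x i * x j)"

text \<open>Concave closure f^+ (the maximum is attained; we write it as a supremum).\<close>
definition concave_closure :: "nat \<Rightarrow> (nat set \<Rightarrow> real) \<Rightarrow> (nat \<Rightarrow> real) \<Rightarrow> real" where
  "concave_closure n f x = Sup {(\<Sum>S\<in>Pow {1..n}. \<theta> S * f S) | \<theta>. marg_feasible n x \<theta>}"

definition upper_pw_ext :: "nat \<Rightarrow> (nat set \<Rightarrow> real) \<Rightarrow> (nat \<Rightarrow> real) \<Rightarrow> real" where
  "upper_pw_ext n f x = Sup {(\<Sum>S\<in>Pow {1..n}. \<theta> S * f S) | \<theta>. pw_feasible n x \<theta>}"

definition ratio :: "real \<Rightarrow> real \<Rightarrow> real" where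
  "ratio a b = (if a = 0 \<and> b = 0 then 1 else a / b)"

end

theory Submission imports Defs begin

lemma pow_card_sum:
  fixes h :: "nat \<Rightarrow> real"
  assumes "finite A"
  shows "(\<Sum>S\<in>Pow A. h (card S)) = (\<Sum>m\<le>card A. real (card A choose m) * h m)"
proof -
  have "(\<Sum>S\<in>Pow A. h (card S)) = (\<Sum>m\<le>card A. \<Sum>S\<in>{S. S \<in> Pow A \<and> card S = m}. h (card S))"
    by (rule sum.group[symmetric]) (use assms in \<open>auto intro: card_mono\<close>)
  also have "\<dots> = (\<Sum>m\<le>card A. real (card A choose m) * h m)"
  proof (rule sum.cong[OF refl])
    fix m
    have "(\<Sum>S\<in>{S. S \<in> Pow A \<and> card S = m}. h (card S)) = (\<Sum>S\<in>{S. S \<in> Pow A \<and> card S = m}. h m)"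
      by (rule sum.cong) auto
    also have "\<dots> = real (card {S. S \<subseteq> A \<and> card S = m}) * h m" by simp
    also have "\<dots> = real (card A choose m) * h m" using n_subsets[OF assms] by simp
    finally show "(\<Sum>S\<in>{S. S \<in> Pow A \<and> card S = m}. h (card S)) = real (card A choose m) * h m" .
  qed
  finally show ?thesis .
qed

lemma sum_filter1:
  fixes F :: "nat set \<Rightarrow> real"
  assumes "finite A" "i \<in> A"
  shows "(\<Sum>S\<in>{S\<in>Pow A. i \<in> S}. F S) = (\<Sum>T\<in>Pow (A - {i}). F (insert i T))"
proof -
  have img: "{S\<in>Pow A. i \<in> S} = insert i ` Pow (A - {i})"
  proof
    show "{S \<in> Pow A. i \<in> S} \<subseteq> insert i ` Pow (A - {i})"
    proof
      fix S assume "S \<in> {S \<in> Pow A. i \<in> S}"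
      then have "S = insert i (S - {i})" "S - {i} \<in> Pow (A - {i})" by auto
      then show "S \<in> insert i ` Pow (A - {i})" by blast
    qed
  qed (use assms in auto)
  have inj: "inj_on (insert i) (Pow (A - {i}))"
    by (rule inj_onI) (metis Diff_insert_absorb PowD Diff_iff singletonI subsetD)
  show ?thesis unfolding img by (rule sum.reindex[OF inj, unfolded comp_def])
qed

lemma sum_filter2:
  fixes F :: "nat set \<Rightarrow> real"
  assumes "finite A" "i \<in> A" "j \<in> A" "i \<noteq> j"
  shows "(\<Sum>S\<in>{S\<in>Pow A. i \<in> S \<and> j \<in> S}. F S) = (\<Sum>T\<in>Pow (A - {i,j}). F (insert i (insert j T)))"
proof -
  have img: "{S\<in>Pow A. i \<in> S \<and> j \<in> S} = (\<lambda>T. insert i (insert j T)) ` Pow (A - {i,j})"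
  proof
    show "{S\<in>Pow A. i \<in> S \<and> j \<in> S} \<subseteq> (\<lambda>T. insert i (insert j T)) ` Pow (A - {i,j})"
    proof
      fix S assume "S \<in> {S\<in>Pow A. i \<in> S \<and> j \<in> S}"
      then have "S = insert i (insert j (S - {i,j}))" "S - {i,j} \<in> Pow (A - {i,j})" by auto
      then show "S \<in> (\<lambda>T. insert i (insert j T)) ` Pow (A - {i,j})" by blast
    qed
  qed (use assms in auto)
  have inj: "inj_on (\<lambda>T. insert i (insert j T)) (Pow (A - {i,j}))"
  proof (rule inj_onI)
    fix T1 T2 assume "T1 \<in> Pow (A - {i,j})" "T2 \<in> Pow (A - {i,j})"
      "insert i (insert j T1) = insert i (insert j T2)"
    then have "insert i (insert j T1) - {i,j} = insert i (insert j T2) - {i,j}" by simp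
    moreover have "insert i (insert j T1) - {i,j} = T1" "insert i (insert j T2) - {i,j} = T2"
      using \<open>T1 \<in> _\<close> \<open>T2 \<in> _\<close> by auto
    ultimately show "T1 = T2" by simp
  qed
  show ?thesis unfolding img by (rule sum.reindex[OF inj, unfolded comp_def])
qed


lemma aux_frac:
  fixes B C N M P :: real
  assumes "C > 0" "N > 0" "N * B = C * M"
  shows "B * (P / C) = P * M / N"
proof -
  have "B = C * M / N" using assms by (simp add: field_simps)
  then show ?thesis using assms by simp
qed

definition thetaP :: "nat \<Rightarrow> (nat \<Rightarrow> real) \<Rightarrow> nat set \<Rightarrow> real" where
  "thetaP n p S = p (card S) / real (n choose card S)"

lemma thetaP_total:
  "(\<Sum>S\<in>Pow {1..n}. thetaP n p S * g (card S)) = (\<Sum>m\<le>n. p m * g m)"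
proof -
  have "(\<Sum>S\<in>Pow {1..n}. thetaP n p S * g (card S)) =
        (\<Sum>S\<in>Pow {1..n}. (\<lambda>m. p m / real (n choose m) * g m) (card S))"
    unfolding thetaP_def by simp
  also have "\<dots> = (\<Sum>m\<le>n. real (n choose m) * (p m / real (n choose m) * g m))"
    using pow_card_sum[of "{1..n}" "\<lambda>m. p m / real (n choose m) * g m"] by simp
  also have "\<dots> = (\<Sum>m\<le>n. p m * g m)"
    by (rule sum.cong) auto
  finally show ?thesis .
qed

lemma thetaP_marg:
  assumes "i \<in> {1..n}"
  shows "(\<Sum>S\<in>{S\<in>Pow {1..n}. i \<in> S}. thetaP n p S) = (\<Sum>m\<le>n. p m * real m) / real n"
proof -
  obtain n' where n: "n = Suc n'" using assms by (cases n) auto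
  have cA: "card ({1..n} - {i}) = n'" using assms n by simp
  have "(\<Sum>S\<in>{S\<in>Pow {1..n}. i \<in> S}. thetaP n p S) = (\<Sum>T\<in>Pow ({1..n} - {i}). thetaP n p (insert i T))"
    by (rule sum_filter1) (use assms in auto)
  also have "\<dots> = (\<Sum>T\<in>Pow ({1..n} - {i}). (\<lambda>m. p (Suc m) / real (n choose Suc m)) (card T))"
  proof (rule sum.cong[OF refl])
    fix T assume "T \<in> Pow ({1..n} - {i})"
    then have "finite T" "i \<notin> T" by (auto intro: finite_subset)
    then show "thetaP n p (insert i T) = (\<lambda>m. p (Suc m) / real (n choose Suc m)) (card T)"
      unfolding thetaP_def by simp
  qed
  also have "\<dots> = (\<Sum>m\<le>n'. real (n' choose m) * (p (Suc m) / real (n choose Suc m)))"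
    using pow_card_sum[of "{1..n} - {i}" "\<lambda>m. p (Suc m) / real (n choose Suc m)"] cA by simp
  also have "\<dots> = (\<Sum>m\<le>n'. p (Suc m) * real (Suc m) / real n)"
  proof (rule sum.cong[OF refl])
    fix m assume m: "m \<in> {..n'}"
    have e: "real (Suc n') * real (n' choose m) = real (Suc n' choose Suc m) * real (Suc m)"
      using Suc_times_binomial_eq[of n' m] by (metis of_nat_mult)
    have pos: "real (Suc n' choose Suc m) > 0" using m by (simp add: zero_less_binomial_iff del: binomial_Suc_Suc)
    show "real (n' choose m) * (p (Suc m) / real (n choose Suc m)) = p (Suc m) * real (Suc m) / real n"
      unfolding n by (rule aux_frac[OF pos _ e]) simp
  qed
  also have "\<dots> = (\<Sum>m\<le>n. p m * real m) / real n"
    unfolding n sum.atMost_Suc_shift by (simp add: sum_divide_distrib)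
  finally show ?thesis .
qed

lemma thetaP_pair:
  assumes "i \<in> {1..n}" "j \<in> {1..n}" "i \<noteq> j"
  shows "(\<Sum>S\<in>{S\<in>Pow {1..n}. i \<in> S \<and> j \<in> S}. thetaP n p S)
         = (\<Sum>m\<le>n. p m * (real m * (real m - 1))) / (real n * (real n - 1))"
proof -
  obtain n' where n: "n = Suc (Suc n')" using assms
    by (metis One_nat_def Suc_le_D atLeastAtMost_iff le_antisym not_less_eq_eq)
  have cA: "card ({1..n} - {i,j}) = n'" using assms n by (simp add: card_Diff_subset)
  have "(\<Sum>S\<in>{S\<in>Pow {1..n}. i \<in> S \<and> j \<in> S}. thetaP n p S)
      = (\<Sum>T\<in>Pow ({1..n} - {i,j}). thetaP n p (insert i (insert j T)))"
    by (rule sum_filter2) (use assms in auto)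
  also have "\<dots> = (\<Sum>T\<in>Pow ({1..n} - {i,j}). (\<lambda>m. p (Suc (Suc m)) / real (n choose Suc (Suc m))) (card T))"
  proof (rule sum.cong[OF refl])
    fix T assume "T \<in> Pow ({1..n} - {i,j})"
    then have "finite T" "i \<notin> T" "j \<notin> T" by (auto intro: finite_subset)
    then show "thetaP n p (insert i (insert j T)) = (\<lambda>m. p (Suc (Suc m)) / real (n choose Suc (Suc m))) (card T)"
      unfolding thetaP_def using assms(3) by simp
  qed
  also have "\<dots> = (\<Sum>m\<le>n'. real (n' choose m) * (p (Suc (Suc m)) / real (n choose Suc (Suc m))))"
    using pow_card_sum[of "{1..n} - {i,j}" "\<lambda>m. p (Suc (Suc m)) / real (n choose Suc (Suc m))"] cA by simp
  also have "\<dots> = (\<Sum>m\<le>n'. p (Suc (Suc m)) * (real (Suc (Suc m)) * (real (Suc (Suc m)) - 1)) / (real n * (real n - 1)))"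
  proof (rule sum.cong[OF refl])
    fix m assume m: "m \<in> {..n'}"
    have e1: "real (Suc n') * real (n' choose m) = real (Suc n' choose Suc m) * real (Suc m)"
      using Suc_times_binomial_eq[of n' m] by (metis of_nat_mult)
    have e2: "real (Suc (Suc n')) * real (Suc n' choose Suc m) = real (Suc (Suc n') choose Suc (Suc m)) * real (Suc (Suc m))"
      using Suc_times_binomial_eq[of "Suc n'" "Suc m"] by (metis of_nat_mult)
    have pos: "real (Suc (Suc n') choose Suc (Suc m)) > 0" using m by (simp add: zero_less_binomial_iff del: binomial_Suc_Suc)
    have e: "real (Suc (Suc n')) * real (Suc n') * real (n' choose m) =
             real (Suc (Suc n') choose Suc (Suc m)) * (real (Suc (Suc m)) * real (Suc m))"
      by (metis e1 e2 mult.assoc mult.commute)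
    have "real (Suc (Suc n')) * real (Suc n') > 0" by simp
    from aux_frac[OF pos this e] show "real (n' choose m) * (p (Suc (Suc m)) / real (n choose Suc (Suc m))) =
          p (Suc (Suc m)) * (real (Suc (Suc m)) * (real (Suc (Suc m)) - 1)) / (real n * (real n - 1))"
      unfolding n by simp
  qed
  also have "\<dots> = (\<Sum>m\<le>n. p m * (real m * (real m - 1))) / (real n * (real n - 1))"
    unfolding n sum.atMost_Suc_shift by (simp add: sum_divide_distrib)
  finally show ?thesis .
qed


lemma thetaP_nonneg:
  assumes "\<forall>m\<le>n. p m \<ge> 0" "S \<in> Pow {1..n}"
  shows "thetaP n p S \<ge> 0"
proof -
  have "card S \<le> n" using assms(2) card_mono[of "{1..n}" S] by auto
  then show ?thesis unfolding thetaP_def using assms(1) by simp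
qed

lemma sizes_marg:
  assumes nn: "\<forall>m\<le>n. p m \<ge> 0" and s1: "(\<Sum>m\<le>n. p m) = 1"
    and s2: "(\<Sum>m\<le>n. p m * real m) = real n * x" and n1: "n \<ge> 1"
  shows "marg_feasible n (\<lambda>_. x) (thetaP n p)"
  unfolding marg_feasible_def
proof (intro conjI ballI)
  fix S assume "S \<in> Pow {1..n}" then show "thetaP n p S \<ge> 0" using thetaP_nonneg nn by blast
next
  show "(\<Sum>S\<in>Pow {1..n}. thetaP n p S) = 1"
    using thetaP_total[of n p "\<lambda>_. 1"] s1 by simp
next
  fix i assume "i \<in> {1..n}"
  then show "(\<Sum>S\<in>{S\<in>Pow {1..n}. i \<in> S}. thetaP n p S) = x"
    using thetaP_marg[of i n p] s2 n1 by simp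
qed

lemma sizes_pw:
  assumes nn: "\<forall>m\<le>n. p m \<ge> 0" and s1: "(\<Sum>m\<le>n. p m) = 1"
    and s2: "(\<Sum>m\<le>n. p m * real m) = real n * x" and n1: "n \<ge> 1"
    and s3: "(\<Sum>m\<le>n. p m * (real m * (real m - 1))) = real n * (real n - 1) * x^2"
  shows "pw_feasible n (\<lambda>_. x) (thetaP n p)"
  unfolding pw_feasible_def
proof (intro conjI ballI impI)
  show "marg_feasible n (\<lambda>_. x) (thetaP n p)" by (rule sizes_marg[OF nn s1 s2 n1])
next
  fix i j assume ij: "i \<in> {1..n}" "j \<in> {1..n}" "i < j"
  then have "real n \<ge> 2" by auto
  then have nz: "real n * (real n - 1) \<noteq> 0" by simp
  show "(\<Sum>S\<in>{S\<in>Pow {1..n}. i \<in> S \<and> j \<in> S}. thetaP n p S) = x * x"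
    using thetaP_pair[of i n j p] ij s3 nz by (simp add: power2_eq_square)
qed

lemma sizes_value:
  "(\<Sum>S\<in>Pow {1..n}. thetaP n p S * real (min (card S) k)) = (\<Sum>m\<le>n. p m * real (min m k))"
  using thetaP_total[of n p "\<lambda>c. real (min c k)"] by simp

lemma card_as_sum:
  fixes S :: "nat set"
  assumes "S \<subseteq> {1..n}"
  shows "real (card S) = (\<Sum>i\<in>{1..n}. if i \<in> S then 1 else 0)"
proof -
  have "(\<Sum>i\<in>{1..n}. if i \<in> S then 1 else (0::real)) = (\<Sum>i\<in>{i\<in>{1..n}. i \<in> S}. 1)"
    by (rule sum.inter_filter[symmetric]) simp
  also have "{i\<in>{1..n}. i \<in> S} = S" using assms by auto
  finally show ?thesis by simp
qed

lemma marg_card: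
  assumes "marg_feasible n (\<lambda>_. x) \<theta>"
  shows "(\<Sum>S\<in>Pow {1..n}. \<theta> S * real (card S)) = real n * x"
proof -
  have "(\<Sum>S\<in>Pow {1..n}. \<theta> S * real (card S)) = (\<Sum>S\<in>Pow {1..n}. \<Sum>i\<in>{1..n}. if i \<in> S then \<theta> S else 0)"
    by (rule sum.cong[OF refl]) (simp add: card_as_sum sum_distrib_left if_distrib cong: if_cong)
  also have "\<dots> = (\<Sum>i\<in>{1..n}. \<Sum>S\<in>Pow {1..n}. if i \<in> S then \<theta> S else 0)"
    by (rule sum.swap)
  also have "\<dots> = (\<Sum>i\<in>{1..n}. \<Sum>S\<in>{S\<in>Pow {1..n}. i \<in> S}. \<theta> S)"
    by (rule sum.cong[OF refl], rule sum.inter_filter[symmetric]) simp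
  also have "\<dots> = (\<Sum>i\<in>{1..n}. x)"
    using assms unfolding marg_feasible_def by simp
  finally show ?thesis by simp
qed

lemma marg_value_le:
  assumes "marg_feasible n (\<lambda>_. x) \<theta>"
  shows "(\<Sum>S\<in>Pow {1..n}. \<theta> S * real (min (card S) k)) \<le> min (real n * x) (real k)"
proof -
  have nn: "\<forall>S\<in>Pow {1..n}. \<theta> S \<ge> 0" and t1: "(\<Sum>S\<in>Pow {1..n}. \<theta> S) = 1"
    using assms unfolding marg_feasible_def by auto
  have "(\<Sum>S\<in>Pow {1..n}. \<theta> S * real (min (card S) k)) \<le> (\<Sum>S\<in>Pow {1..n}. \<theta> S * real (card S))"
    by (rule sum_mono) (use nn in \<open>auto intro: mult_left_mono\<close>)
  moreover have "(\<Sum>S\<in>Pow {1..n}. \<theta> S * real (min (card S) k)) \<le> (\<Sum>S\<in>Pow {1..n}. \<theta> S * real k)"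
    by (rule sum_mono) (use nn in \<open>auto intro: mult_left_mono\<close>)
  ultimately show ?thesis using marg_card[OF assms] t1 by (simp add: sum_distrib_right[symmetric])
qed

lemma value_nonneg:
  assumes "marg_feasible n x \<theta>"
  shows "(\<Sum>S\<in>Pow {1..n}. \<theta> S * real (min (card S) k)) \<ge> 0"
  using assms unfolding marg_feasible_def by (auto intro!: sum_nonneg)


definition pt :: "nat \<Rightarrow> nat \<Rightarrow> real" where "pt a m = (if m = a then 1 else 0)"

lemma sum_pt3:
  assumes "a \<le> n" "b \<le> n" "c \<le> n"
  shows "(\<Sum>m\<le>n. (\<alpha> * pt a m + \<beta> * pt b m + \<gamma> * pt c m) * g m) = \<alpha> * g a + \<beta> * g b + \<gamma> * g c"
proof -
  have one: "\<And>a. a \<le> n \<Longrightarrow> (\<Sum>m\<le>n. pt a m * g m) = g a"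
  proof -
    fix a assume "a \<le> n"
    have eq: "(\<lambda>m. pt a m * g m) = (\<lambda>m. if m = a then g a else 0)" by (auto simp: pt_def)
    show "(\<Sum>m\<le>n. pt a m * g m) = g a" unfolding eq using \<open>a \<le> n\<close> by simp
  qed
  have "(\<Sum>m\<le>n. (\<alpha> * pt a m + \<beta> * pt b m + \<gamma> * pt c m) * g m)
     = \<alpha> * (\<Sum>m\<le>n. pt a m * g m) + \<beta> * (\<Sum>m\<le>n. pt b m * g m) + \<gamma> * (\<Sum>m\<le>n. pt c m * g m)"
    by (simp add: sum.distrib sum_distrib_left algebra_simps)
  then show ?thesis using one assms by simp
qed

definition Qf :: "real \<Rightarrow> real \<Rightarrow> real \<Rightarrow> real \<Rightarrow> real" where
  "Qf mu x u v = (mu - u) * (mu - v) + mu * (1 - x)"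

definition w3 :: "real \<Rightarrow> real \<Rightarrow> real \<Rightarrow> real \<Rightarrow> real \<Rightarrow> real" where
  "w3 mu x a b c = Qf mu x b c / ((a - b) * (a - c))"

lemma three_point_moments:
  fixes a b c mu x :: real
  assumes "a \<noteq> b" "a \<noteq> c" "b \<noteq> c"
  shows "w3 mu x a b c + w3 mu x b a c + w3 mu x c a b = 1"
    and "w3 mu x a b c * a + w3 mu x b a c * b + w3 mu x c a b * c = mu"
    and "w3 mu x a b c * (a * (a - 1)) + w3 mu x b a c * (b * (b - 1)) + w3 mu x c a b * (c * (c - 1))
         = mu * mu - mu * x"
proof -
  have d1: "a - b \<noteq> 0" "a - c \<noteq> 0" "b - c \<noteq> 0" "b - a \<noteq> 0" "c - a \<noteq> 0" "c - b \<noteq> 0"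
    using assms by auto
  have d2: "(a - b) * (a - c) \<noteq> 0" "(b - a) * (b - c) \<noteq> 0" "(c - a) * (c - b) \<noteq> 0"
    using d1 by auto
  show "w3 mu x a b c + w3 mu x b a c + w3 mu x c a b = 1"
    unfolding w3_def Qf_def using d1 d2 by (simp add: divide_simps) (simp add: algebra_simps)
  show "w3 mu x a b c * a + w3 mu x b a c * b + w3 mu x c a b * c = mu"
    unfolding w3_def Qf_def using d1 d2 by (simp add: divide_simps) (simp add: algebra_simps)
  show "w3 mu x a b c * (a * (a - 1)) + w3 mu x b a c * (b * (b - 1)) + w3 mu x c a b * (c * (c - 1))
         = mu * mu - mu * x"
    unfolding w3_def Qf_def using d1 d2 by (simp add: divide_simps) (simp add: algebra_simps)
qed


definition p3 :: "nat \<Rightarrow> real \<Rightarrow> nat \<Rightarrow> nat \<Rightarrow> nat \<Rightarrow> nat \<Rightarrow> real" where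
  "p3 n x a b c m = w3 (real n * x) x a b c * pt a m + w3 (real n * x) x b a c * pt b m
                    + w3 (real n * x) x c a b * pt c m"

lemma three_pw:
  assumes "a < b" "b < c" "c \<le> n"
    and "w3 (real n * x) x a b c \<ge> 0" "w3 (real n * x) x b a c \<ge> 0" "w3 (real n * x) x c a b \<ge> 0"
  shows "pw_feasible n (\<lambda>_. x) (thetaP n (p3 n x a b c))"
    and "(\<Sum>S\<in>Pow {1..n}. thetaP n (p3 n x a b c) S * real (min (card S) k))
         = w3 (real n * x) x a b c * real (min a k) + w3 (real n * x) x b a c * real (min b k)
           + w3 (real n * x) x c a b * real (min c k)"
proof -
  have abc: "a \<le> n" "b \<le> n" "c \<le> n" using assms by auto
  have ne: "real a \<noteq> real b" "real a \<noteq> real c" "real b \<noteq> real c" using assms by auto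
  note M = three_point_moments[OF ne, of "real n * x" x]
  have S: "\<And>g. (\<Sum>m\<le>n. p3 n x a b c m * g m) = w3 (real n * x) x a b c * g a + w3 (real n * x) x b a c * g b
           + w3 (real n * x) x c a b * g c"
    unfolding p3_def by (rule sum_pt3[OF abc])
  show "(\<Sum>S\<in>Pow {1..n}. thetaP n (p3 n x a b c) S * real (min (card S) k))
         = w3 (real n * x) x a b c * real (min a k) + w3 (real n * x) x b a c * real (min b k)
           + w3 (real n * x) x c a b * real (min c k)"
    unfolding sizes_value by (rule S)
  show "pw_feasible n (\<lambda>_. x) (thetaP n (p3 n x a b c))"
  proof (rule sizes_pw)
    show "\<forall>m\<le>n. p3 n x a b c m \<ge> 0" using assms(4-6) by (auto simp: p3_def pt_def)
    show "(\<Sum>m\<le>n. p3 n x a b c m) = 1" using S[of "\<lambda>_. 1"] M(1) by simp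
    show "(\<Sum>m\<le>n. p3 n x a b c m * real m) = real n * x" using S[of real] M(2) by simp
    show "1 \<le> n" using assms by simp
    show "(\<Sum>m\<le>n. p3 n x a b c m * (real m * (real m - 1))) = real n * (real n - 1) * x\<^sup>2"
      using S[of "\<lambda>m. real m * (real m - 1)"] M(3) by (simp add: power2_eq_square algebra_simps)
  qed
qed

lemma bdd_marg:
  "bdd_above {(\<Sum>S\<in>Pow {1..n}. \<theta> S * real (min (card S) k)) | \<theta>. marg_feasible n (\<lambda>_. x) \<theta>}"
  by (rule bdd_aboveI[where M = "real k"]) (use marg_value_le in force)

lemma bdd_pw:
  "bdd_above {(\<Sum>S\<in>Pow {1..n}. \<theta> S * real (min (card S) k)) | \<theta>. pw_feasible n (\<lambda>_. x) \<theta>}"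
  by (rule bdd_aboveI[where M = "real k"]) (use marg_value_le in \<open>force simp: pw_feasible_def\<close>)


lemma sum_pt1:
  assumes "a \<le> n" shows "(\<Sum>m\<le>n. pt a m * g m) = g a"
proof -
  have eq: "(\<lambda>m. pt a m * g m) = (\<lambda>m. if m = a then g a else 0)" by (auto simp: pt_def)
  show ?thesis unfolding eq using assms by simp
qed

lemma F1_bound:
  fixes k s x mu :: real
  assumes "k \<ge> 1" "0 \<le> x" "x \<le> 1" "0 \<le> s" "s \<le> 1" "mu = k - s + x"
  shows "k - (1 - x) * s \<ge> (1 - 1 / (4 * k)) * min mu k"
proof (cases "mu \<le> k")
  case True
  then have xs: "x \<le> s" using assms by simp
  have key: "4 * k * x * (1 - s) \<le> k - s + x"
  proof (cases "1 - 4 * k * (1 - s) \<ge> 0")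
    case True
    then have "x * (1 - 4 * k * (1 - s)) \<ge> 0" using assms by simp
    then show ?thesis using assms by (simp add: algebra_simps)
  next
    case False
    then have "(s - x) * (4 * k * (1 - s) - 1) \<ge> 0" using xs by simp
    moreover have "k * (1 - 2 * s)^2 \<ge> 0" using assms by simp
    ultimately show ?thesis using assms by (simp add: algebra_simps power2_eq_square) 
  qed
  have e1: "(1 - 1 / (4 * k)) * min mu k = mu - mu / (4 * k)" using True by (simp add: algebra_simps)
  have h1: "mu / (4 * k) \<ge> x * (1 - s)"
  proof -
    have "x * (1 - s) = (4 * k * x * (1 - s)) / (4 * k)" using assms by simp
    also have "\<dots> \<le> mu / (4 * k)" using key assms by (intro divide_right_mono) auto
    finally show ?thesis .
  qed
  have "(1 - x) * s = s - x * s" "x * (1 - s) = x - x * s" by (simp_all add: algebra_simps)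
  then show ?thesis unfolding e1 using h1 assms(6) by linarith
next
  case False
  then have xs: "s \<le> x" using assms by simp
  have "(1 - x) * s \<le> (1 - s) * s" using xs assms by (simp add: mult_right_mono)
  also have "(1 - s) * s \<le> 1 / 4" using zero_le_power2[of "s - 1/2"] by (simp add: power2_eq_square algebra_simps)
  finally have h: "(1 - x) * s \<le> 1 / 4" .
  have "1 / (4 * k) * k = 1 / 4" using assms by simp
  then have "(1 - 1 / (4 * k)) * min mu k = k - 1/4" using False by (simp add: algebra_simps)
  then show ?thesis using h by simp
qed


lemma Qf_n: "Qf (real n * x) x u (real n) = (real n - real n * x) * (u - real n * x + x)"
  by (simp add: Qf_def algebra_simps)

lemma Qf_0: "Qf mu x 0 v = mu * (mu - v + 1 - x)"
  by (simp add: Qf_def algebra_simps)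

lemma Qf_consec:
  assumes "real n \<ge> a + 1" "a \<ge> 0"
  shows "Qf (real n * x) x a (a + 1) \<ge> 0"
proof -
  have n0: "real n > 0" using assms by simp
  define u where "u = real n * x - a"
  have "real n * Qf (real n * x) x a (a + 1) = real n * (a + u^2) - (a + u)^2"
    unfolding Qf_def u_def by (simp add: algebra_simps power2_eq_square)
  also have "\<dots> = (real n - (a + 1)) * (a + u^2) + a * (1 - u)^2"
    by (simp add: algebra_simps power2_eq_square)
  also have "\<dots> \<ge> 0" using assms by (intro add_nonneg_nonneg mult_nonneg_nonneg) auto
  finally show ?thesis using n0 by (simp add: zero_le_mult_iff)
qed

lemma caseF2:
  assumes n2: "n \<ge> 2" and x: "0 < x" "x < 1" and j1: "real j \<le> (real n - 1) * x"
    and j2: "(real n - 1) * x < real j + 1" and kj: "k \<le> j"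
  shows "\<exists>\<theta>. pw_feasible n (\<lambda>_. x) \<theta> \<and>
          (\<Sum>S\<in>Pow {1..n}. \<theta> S * real (min (card S) k)) \<ge> (1 - 1 / (4 * real k)) * min (real n * x) (real k)"
proof -
  have "(real n - 1) * x < real n - 1" using x n2 by simp
  then have jn: "Suc j < n" using j1 by linarith
  have nm: "real n - real n * x \<ge> 0" using x by (simp add: mult_left_le)
  have t: "real n * x - x = (real n - 1) * x" by (simp add: algebra_simps)
  have wa: "w3 (real n * x) x (real j) (real (Suc j)) (real n) \<ge> 0"
  proof -
    have "Qf (real n * x) x (real (Suc j)) (real n) \<ge> 0"
      unfolding Qf_n using nm j2 t by (intro mult_nonneg_nonneg) auto
    moreover have "(real j - real (Suc j)) * (real j - real n) \<ge> 0" using jn by simp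
    ultimately show ?thesis unfolding w3_def by simp
  qed
  have wb: "w3 (real n * x) x (real (Suc j)) (real j) (real n) \<ge> 0"
  proof -
    have "Qf (real n * x) x (real j) (real n) \<le> 0"
      unfolding Qf_n using nm j1 t by (intro mult_nonneg_nonpos) auto
    moreover have "(real (Suc j) - real j) * (real (Suc j) - real n) \<le> 0" using jn by simp
    ultimately show ?thesis unfolding w3_def by (simp add: zero_le_divide_iff)
  qed
  have wc: "w3 (real n * x) x (real n) (real j) (real (Suc j)) \<ge> 0"
  proof -
    have "Qf (real n * x) x (real j) (real j + 1) \<ge> 0" by (rule Qf_consec) (use jn in auto)
    moreover have "(real n - real j) * (real n - real (Suc j)) \<ge> 0" using jn by simp
    ultimately show ?thesis unfolding w3_def by (metis divide_nonneg_nonneg of_nat_Suc add.commute)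
  qed
  have ne: "real j \<noteq> real (Suc j)" "real j \<noteq> real n" "real (Suc j) \<noteq> real n" using jn by auto
  note M = three_point_moments[OF ne, of "real n * x" x]
  note T1 = three_pw(1)[OF lessI jn order_refl wa wb wc]
  note T2 = three_pw(2)[OF lessI jn order_refl wa wb wc, of k]
  have val: "(\<Sum>S\<in>Pow {1..n}. thetaP n (p3 n x j (Suc j) n) S * real (min (card S) k)) = real k"
  proof -
    have m: "min j k = k" "min (Suc j) k = k" "min n k = k" using kj jn by auto
    have "(\<Sum>S\<in>Pow {1..n}. thetaP n (p3 n x j (Suc j) n) S * real (min (card S) k)) =
      real k * (w3 (real n * x) x (real j) (real (Suc j)) (real n) + w3 (real n * x) x (real (Suc j)) (real j) (real n)
      + w3 (real n * x) x (real n) (real j) (real (Suc j)))"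
      using T2 unfolding m by (simp add: algebra_simps)
    then show ?thesis using M(1) by simp
  qed
  have "(1 - 1 / (4 * real k)) * min (real n * x) (real k) \<le> real k"
  proof -
    have "min (real n * x) (real k) \<le> real k" by simp
    moreover have "min (real n * x) (real k) \<ge> 0" using x by simp
    ultimately show ?thesis by (simp add: mult_le_cancel_right1 algebra_simps)
      (smt (verit, ccfv_SIG) divide_nonneg_nonneg mult_nonneg_nonneg of_nat_0_le_iff)
  qed
  then show ?thesis using T1 jn val by (intro exI[of _ "thetaP n (p3 n x j (Suc j) n)"]) auto
qed


lemma c_le1:
  assumes "k \<ge> 1" "m \<ge> 0"
  shows "(1 - 1 / (4 * real k)) * m \<le> m"
proof -
  have "1 / (4 * real k) * m \<ge> 0" using assms by simp
  then show ?thesis by (simp add: algebra_simps)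
qed

lemma caseF3:
  assumes n2: "n \<ge> 2" and x: "0 < x" "x < 1" and j1: "real j \<le> (real n - 1) * x"
    and j2: "(real n - 1) * x < real j + 1" and kj: "j + 2 \<le> k" and kn: "k \<le> n"
  shows "\<exists>\<theta>. pw_feasible n (\<lambda>_. x) \<theta> \<and>
          (\<Sum>S\<in>Pow {1..n}. \<theta> S * real (min (card S) k)) \<ge> (1 - 1 / (4 * real k)) * min (real n * x) (real k)"
proof -
  have jn: "Suc (Suc j) \<le> n" using kj kn by simp
  have mu0: "real n * x \<ge> 0" using x by simp
  have t: "real n * x - x = (real n - 1) * x" by (simp add: algebra_simps)
  have wa: "w3 (real n * x) x (real 0) (real (Suc j)) (real (Suc (Suc j))) \<ge> 0"
  proof -
    have q: "Qf (real n * x) x (real (Suc j)) (real (Suc j) + 1) \<ge> 0" by (rule Qf_consec) (use jn in auto)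
    have e: "real (Suc (Suc j)) = real (Suc j) + 1" by simp
    have "(real 0 - real (Suc j)) * (real 0 - real (Suc (Suc j))) \<ge> 0"
      by (rule mult_nonpos_nonpos) auto
    then show ?thesis unfolding w3_def e using q by simp
  qed
  have wb: "w3 (real n * x) x (real (Suc j)) (real 0) (real (Suc (Suc j))) \<ge> 0"
  proof -
    have "Qf (real n * x) x 0 (real (Suc (Suc j))) \<le> 0"
      unfolding Qf_0 using mu0 j2 t x by (intro mult_nonneg_nonpos) auto
    moreover have "(real (Suc j) - real 0) * (real (Suc j) - real (Suc (Suc j))) \<le> 0" by simp
    ultimately show ?thesis unfolding w3_def by (simp add: zero_le_divide_iff)
  qed
  have wc: "w3 (real n * x) x (real (Suc (Suc j))) (real 0) (real (Suc j)) \<ge> 0"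
  proof -
    have "Qf (real n * x) x 0 (real (Suc j)) \<ge> 0"
      unfolding Qf_0 using mu0 j1 t x by (intro mult_nonneg_nonneg) auto
    moreover have "(real (Suc (Suc j)) - real 0) * (real (Suc (Suc j)) - real (Suc j)) \<ge> 0" by simp
    ultimately show ?thesis unfolding w3_def by (simp add: zero_le_divide_iff)
  qed
  have ne: "real 0 \<noteq> real (Suc j)" "real 0 \<noteq> real (Suc (Suc j))" "real (Suc j) \<noteq> real (Suc (Suc j))" by auto
  note M = three_point_moments[OF ne, of "real n * x" x]
  have o1: "0 < Suc j" "Suc j < Suc (Suc j)" by auto
  note T1 = three_pw(1)[OF o1 jn wa wb wc]
  note T2 = three_pw(2)[OF o1 jn wa wb wc, of k]
  have val: "(\<Sum>S\<in>Pow {1..n}. thetaP n (p3 n x 0 (Suc j) (Suc (Suc j))) S * real (min (card S) k)) = real n * x"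
  proof -
    have m: "min 0 k = 0" "min (Suc j) k = Suc j" "min (Suc (Suc j)) k = Suc (Suc j)" using kj by auto
    have "(\<Sum>S\<in>Pow {1..n}. thetaP n (p3 n x 0 (Suc j) (Suc (Suc j))) S * real (min (card S) k)) =
      w3 (real n * x) x (real 0) (real (Suc j)) (real (Suc (Suc j))) * real 0
      + w3 (real n * x) x (real (Suc j)) (real 0) (real (Suc (Suc j))) * real (Suc j)
      + w3 (real n * x) x (real (Suc (Suc j))) (real 0) (real (Suc j)) * real (Suc (Suc j))"
      using T2 unfolding m .
    then show ?thesis using M(2) by simp
  qed
  have "(1 - 1 / (4 * real k)) * min (real n * x) (real k) \<le> min (real n * x) (real k)"
    by (rule c_le1) (use kj mu0 in auto)
  also have "\<dots> \<le> real n * x" by simp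
  finally show ?thesis using T1 val by (intro exI[of _ "thetaP n (p3 n x 0 (Suc j) (Suc (Suc j)))"]) auto
qed


lemma caseF1:
  assumes n2: "n \<ge> 2" and x: "0 < x" "x < 1" and j1: "real j \<le> (real n - 1) * x"
    and j2: "(real n - 1) * x < real j + 1" and kj: "k = Suc j"
  shows "\<exists>\<theta>. pw_feasible n (\<lambda>_. x) \<theta> \<and>
          (\<Sum>S\<in>Pow {1..n}. \<theta> S * real (min (card S) k)) \<ge> (1 - 1 / (4 * real k)) * min (real n * x) (real k)"
proof -
  have "(real n - 1) * x < real n - 1" using x n2 by simp
  then have kn: "k < n" using j1 kj by linarith
  have mu0: "real n * x \<ge> 0" using x by simp
  have nm: "real n - real n * x \<ge> 0" using x by (simp add: mult_left_le)
  have t: "real n * x - x = (real n - 1) * x" by (simp add: algebra_simps)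
  have t2: "(real n - 1) * x \<le> real n - 1" using x n2 by (simp add: mult_left_le)
  have rk: "real k = real j + 1" using kj by simp
  have wa: "w3 (real n * x) x (real 0) (real k) (real n) \<ge> 0"
  proof -
    have "Qf (real n * x) x (real k) (real n) \<ge> 0"
      unfolding Qf_n using nm j2 t rk by (intro mult_nonneg_nonneg) auto
    moreover have "(real 0 - real k) * (real 0 - real n) \<ge> 0" by (rule mult_nonpos_nonpos) auto
    ultimately show ?thesis unfolding w3_def by simp
  qed
  have wb: "w3 (real n * x) x (real k) (real 0) (real n) \<ge> 0"
  proof -
    have "Qf (real n * x) x 0 (real n) \<le> 0"
      unfolding Qf_0 using mu0 t t2 x by (intro mult_nonneg_nonpos) auto
    moreover have "(real k - real 0) * (real k - real n) \<le> 0" using kn by (intro mult_nonneg_nonpos) auto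
    ultimately show ?thesis unfolding w3_def by (simp add: zero_le_divide_iff)
  qed
  have wc: "w3 (real n * x) x (real n) (real 0) (real k) \<ge> 0"
  proof -
    have "Qf (real n * x) x 0 (real k) \<ge> 0"
      unfolding Qf_0 using mu0 j1 t x rk by (intro mult_nonneg_nonneg) auto
    moreover have "(real n - real 0) * (real n - real k) \<ge> 0" using kn by simp
    ultimately show ?thesis unfolding w3_def by (simp add: zero_le_divide_iff)
  qed
  have ne: "real 0 \<noteq> real k" "real 0 \<noteq> real n" "real k \<noteq> real n" using kn kj by auto
  note M = three_point_moments[OF ne, of "real n * x" x]
  have o1: "0 < k" "k < n" using kj kn by auto
  note T1 = three_pw(1)[OF o1 order_refl wa wb wc]
  note T2 = three_pw(2)[OF o1 order_refl wa wb wc, of k]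
  define s where "s = real k - real n * x + x"
  have ka: "real k * w3 (real n * x) x (real 0) (real k) (real n) = (1 - x) * s"
  proof -
    have "real k > 0" "real n > 0" using o1 by auto
    then show ?thesis unfolding w3_def Qf_n s_def by (simp add: field_simps)
  qed
  have val: "(\<Sum>S\<in>Pow {1..n}. thetaP n (p3 n x 0 k n) S * real (min (card S) k)) = real k - (1 - x) * s"
  proof -
    have m: "min 0 k = 0" "min k k = k" "min n k = k" using kn by auto
    have "(\<Sum>S\<in>Pow {1..n}. thetaP n (p3 n x 0 k n) S * real (min (card S) k)) =
      w3 (real n * x) x (real 0) (real k) (real n) * real 0
      + w3 (real n * x) x (real k) (real 0) (real n) * real k
      + w3 (real n * x) x (real n) (real 0) (real k) * real k"
      using T2 unfolding m .
    also have "\<dots> = real k * (1 - w3 (real n * x) x (real 0) (real k) (real n))"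
    proof -
      have e: "1 - w3 (real n * x) x (real 0) (real k) (real n) =
            w3 (real n * x) x (real k) (real 0) (real n) + w3 (real n * x) x (real n) (real 0) (real k)"
        using M(1) by linarith
      show ?thesis unfolding e by (simp add: algebra_simps)
    qed
    finally show ?thesis using ka by (simp add: algebra_simps)
  qed
  have "real k - (1 - x) * s \<ge> (1 - 1 / (4 * real k)) * min (real n * x) (real k)"
    by (rule F1_bound) (use o1 x j1 j2 rk in \<open>auto simp: s_def algebra_simps\<close>)
  then show ?thesis using T1 val by (intro exI[of _ "thetaP n (p3 n x 0 k n)"]) auto
qed


lemma gen_pw:
  assumes "a \<le> n" "b \<le> n" "c \<le> n" "\<alpha> \<ge> 0" "\<beta> \<ge> 0" "\<gamma> \<ge> 0" "n \<ge> 1"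
    and "\<alpha> + \<beta> + \<gamma> = 1" "\<alpha> * real a + \<beta> * real b + \<gamma> * real c = real n * x"
    and "\<alpha> * (real a * (real a - 1)) + \<beta> * (real b * (real b - 1)) + \<gamma> * (real c * (real c - 1))
         = real n * (real n - 1) * x^2"
  shows "pw_feasible n (\<lambda>_. x) (thetaP n (\<lambda>m. \<alpha> * pt a m + \<beta> * pt b m + \<gamma> * pt c m))"
    and "(\<Sum>S\<in>Pow {1..n}. thetaP n (\<lambda>m. \<alpha> * pt a m + \<beta> * pt b m + \<gamma> * pt c m) S * real (min (card S) k))
         = \<alpha> * real (min a k) + \<beta> * real (min b k) + \<gamma> * real (min c k)"
proof -
  note S = sum_pt3[OF assms(1-3), of \<alpha> \<beta> \<gamma>]
  show "(\<Sum>S\<in>Pow {1..n}. thetaP n (\<lambda>m. \<alpha> * pt a m + \<beta> * pt b m + \<gamma> * pt c m) S * real (min (card S) k))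
         = \<alpha> * real (min a k) + \<beta> * real (min b k) + \<gamma> * real (min c k)"
    unfolding sizes_value by (rule S)
  show "pw_feasible n (\<lambda>_. x) (thetaP n (\<lambda>m. \<alpha> * pt a m + \<beta> * pt b m + \<gamma> * pt c m))"
  proof (rule sizes_pw)
    show "\<forall>m\<le>n. \<alpha> * pt a m + \<beta> * pt b m + \<gamma> * pt c m \<ge> 0" using assms(4-6) by (auto simp: pt_def)
    show "(\<Sum>m\<le>n. \<alpha> * pt a m + \<beta> * pt b m + \<gamma> * pt c m) = 1" using S[of "\<lambda>_. 1"] assms(8) by simp
    show "(\<Sum>m\<le>n. (\<alpha> * pt a m + \<beta> * pt b m + \<gamma> * pt c m) * real m) = real n * x"
      using S[of real] assms(9) by simp
    show "1 \<le> n" using assms by simp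
    show "(\<Sum>m\<le>n. (\<alpha> * pt a m + \<beta> * pt b m + \<gamma> * pt c m) * (real m * (real m - 1))) = real n * (real n - 1) * x\<^sup>2"
      using S[of "\<lambda>m. real m * (real m - 1)"] assms(10) by simp
  qed
qed

lemma pw_lower:
  assumes n1: "1 \<le> n" and k1: "1 \<le> k" and kn: "k \<le> n" and x0: "0 \<le> x" and x1: "x \<le> 1"
  shows "\<exists>\<theta>. pw_feasible n (\<lambda>_. x) \<theta> \<and>
          (\<Sum>S\<in>Pow {1..n}. \<theta> S * real (min (card S) k)) \<ge> (1 - 1 / (4 * real k)) * min (real n * x) (real k)"
proof -
  consider "x = 0" | "x = 1" | "n = 1" "0 < x" "x < 1" | "n \<ge> 2" "0 < x" "x < 1"
    using x0 x1 n1 by linarith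
  then show ?thesis
  proof cases
    case 1
    note G = gen_pw[of 0 n 0 0 1 0 0 x, OF _ _ _ _ _ _ n1]
    have "(1 - 1 / (4 * real k)) * min (real n * x) (real k) = 0" using 1 by simp
    then show ?thesis using G 1 by (intro exI[of _ "thetaP n (\<lambda>m. 1 * pt 0 m + 0 * pt 0 m + 0 * pt 0 m)"]) auto
  next
    case 2
    note G = gen_pw[of n n n n 1 0 0 x, OF _ _ _ _ _ _ n1]
    have "(1 - 1 / (4 * real k)) * min (real n * x) (real k) \<le> min (real n * x) (real k)"
      by (rule c_le1) (use k1 2 in auto)
    then show ?thesis using G 2 kn
      by (intro exI[of _ "thetaP n (\<lambda>m. 1 * pt n m + 0 * pt n m + 0 * pt n m)"]) (auto simp: power2_eq_square)
  next
    case 3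
    note G = gen_pw[of 0 n 1 1 "1 - x" x 0 x, OF _ _ _ _ _ _ n1]
    have "(1 - 1 / (4 * real k)) * min (real n * x) (real k) \<le> min (real n * x) (real k)"
      by (rule c_le1) (use k1 3 in auto)
    then show ?thesis using G 3 k1
      by (intro exI[of _ "thetaP n (\<lambda>m. (1 - x) * pt 0 m + x * pt 1 m + 0 * pt 1 m)"]) auto
  next
    case 4
    define j where "j = nat \<lfloor>(real n - 1) * x\<rfloor>"
    have nn: "(real n - 1) * x \<ge> 0" using 4 by simp
    have j1: "real j \<le> (real n - 1) * x" unfolding j_def using nn by linarith
    have j2: "(real n - 1) * x < real j + 1" unfolding j_def using nn by linarith
    consider "k \<le> j" | "j + 2 \<le> k" | "k = Suc j" by linarith
    then show ?thesis
    proof cases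
      case 1 then show ?thesis using caseF2[OF 4(1-3) j1 j2] by blast
    next
      case 2 then show ?thesis using caseF3[OF 4(1-3) j1 j2 _ kn] by blast
    next
      case 3 then show ?thesis using caseF1[OF 4(1-3) j1 j2] by blast
    qed
  qed
qed


lemma pw_card2:
  assumes "pw_feasible n (\<lambda>_. x) \<theta>"
  shows "(\<Sum>S\<in>Pow {1..n}. \<theta> S * (real (card S) * real (card S))) = real n * x + real n * (real n - 1) * x^2"
proof -
  have mf: "marg_feasible n (\<lambda>_. x) \<theta>" using assms unfolding pw_feasible_def by simp
  have q: "\<And>i j. i \<in> {1..n} \<Longrightarrow> j \<in> {1..n} \<Longrightarrow>
     (\<Sum>S\<in>Pow {1..n}. if i \<in> S \<and> j \<in> S then \<theta> S else 0) = (if i = j then x else x^2)"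
  proof -
    fix i j assume ij: "i \<in> {1..n}" "j \<in> {1..n}"
    have e: "(\<Sum>S\<in>Pow {1..n}. if i \<in> S \<and> j \<in> S then \<theta> S else 0) = (\<Sum>S\<in>{S\<in>Pow {1..n}. i \<in> S \<and> j \<in> S}. \<theta> S)"
      by (rule sum.inter_filter[symmetric]) simp
    show "(\<Sum>S\<in>Pow {1..n}. if i \<in> S \<and> j \<in> S then \<theta> S else 0) = (if i = j then x else x^2)"
    proof (cases "i = j")
      case True then show ?thesis unfolding e using mf ij unfolding marg_feasible_def by simp
    next
      case False
      show ?thesis
      proof (cases "i < j")
        case True then show ?thesis unfolding e using assms ij unfolding pw_feasible_def by (simp add: power2_eq_square)
      next
        case f2: False
        then have "j < i" using False by simp
        moreover have "{S\<in>Pow {1..n}. i \<in> S \<and> j \<in> S} = {S\<in>Pow {1..n}. j \<in> S \<and> i \<in> S}" by auto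
        ultimately show ?thesis unfolding e using assms ij False unfolding pw_feasible_def
          by (simp add: power2_eq_square)
      qed
    qed
  qed
  have "(\<Sum>S\<in>Pow {1..n}. \<theta> S * (real (card S) * real (card S))) =
        (\<Sum>S\<in>Pow {1..n}. \<Sum>i\<in>{1..n}. \<Sum>j\<in>{1..n}. if i \<in> S \<and> j \<in> S then \<theta> S else 0)"
  proof (rule sum.cong[OF refl])
    fix S assume "S \<in> Pow {1..n}"
    then have c: "real (card S) = (\<Sum>i\<in>{1..n}. if i \<in> S then 1 else 0)" by (intro card_as_sum) auto
    show "\<theta> S * (real (card S) * real (card S)) = (\<Sum>i\<in>{1..n}. \<Sum>j\<in>{1..n}. if i \<in> S \<and> j \<in> S then \<theta> S else 0)"
      unfolding c by (simp add: sum_distrib_left sum_distrib_right if_distrib cong: if_cong) (auto intro!: sum.cong)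
  qed
  also have "\<dots> = (\<Sum>i\<in>{1..n}. \<Sum>S\<in>Pow {1..n}. \<Sum>j\<in>{1..n}. if i \<in> S \<and> j \<in> S then \<theta> S else 0)"
    by (rule sum.swap)
  also have "\<dots> = (\<Sum>i\<in>{1..n}. \<Sum>j\<in>{1..n}. \<Sum>S\<in>Pow {1..n}. if i \<in> S \<and> j \<in> S then \<theta> S else 0)"
    by (rule sum.cong[OF refl], rule sum.swap)
  also have "\<dots> = (\<Sum>i\<in>{1..n}. \<Sum>j\<in>{1..n}. if i = j then x else x^2)"
    using q by simp
  also have "\<dots> = (\<Sum>i\<in>{1..n}. x + (real n - 1) * x^2)"
  proof (rule sum.cong[OF refl])
    fix i assume i: "i \<in> {1..n}"
    have "(\<Sum>j\<in>{1..n}. if i = j then x else x^2) = (\<Sum>j\<in>{1..n}. x^2 + (if i = j then x - x^2 else 0))"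
      by (rule sum.cong) auto
    also have "\<dots> = real n * x^2 + (x - x^2)" using i by (simp add: sum.distrib)
    finally show "(\<Sum>j\<in>{1..n}. if i = j then x else x^2) = x + (real n - 1) * x^2" by (simp add: algebra_simps)
  qed
  also have "\<dots> = real n * x + real n * (real n - 1) * x^2" by (simp add: algebra_simps)
  finally show ?thesis .
qed

lemma eq_upper:
  assumes k1: "k \<ge> 1" and n: "n = 2 * k" and pw: "pw_feasible n (\<lambda>_. 1/2) \<theta>"
  shows "(\<Sum>S\<in>Pow {1..n}. \<theta> S * real (min (card S) k)) \<le> real k - 1/4"
proof -
  have mf: "marg_feasible n (\<lambda>_. 1/2) \<theta>" using pw unfolding pw_feasible_def by simp
  have nn: "\<forall>S\<in>Pow {1..n}. \<theta> S \<ge> 0" using mf unfolding marg_feasible_def by simp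
  have kp: "real k > 0" using k1 by simp
  have pt: "real (min c k) \<le> 3/2 * real c - (real c * real c) / (2 * real k)" if "c \<le> n" for c
  proof -
    have "2 * real k * real (min c k) \<le> 3 * real k * real c - real c * real c"
    proof (cases "c \<le> k")
      case True
      then have "real c * real c \<le> real k * real c" by (simp add: mult_right_mono)
      then show ?thesis using True by (simp add: algebra_simps)
    next
      case False
      have "(real c - real k) * (real c - real k) \<le> real k * (real c - real k)"
        using False that n by (intro mult_right_mono) auto
      then show ?thesis using False by (simp add: algebra_simps)
    qed
    then show ?thesis using kp by (simp add: field_simps)
  qed
  have "(\<Sum>S\<in>Pow {1..n}. \<theta> S * real (min (card S) k)) \<le>
        (\<Sum>S\<in>Pow {1..n}. 3/2 * (\<theta> S * real (card S)) - (\<theta> S * (real (card S) * real (card S))) / (2 * real k))"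
  proof (rule sum_mono)
    fix S assume S: "S \<in> Pow {1..n}"
    then have "card S \<le> n" using card_mono[of "{1..n}" S] by auto
    then have "\<theta> S * real (min (card S) k) \<le> \<theta> S * (3/2 * real (card S) - (real (card S) * real (card S)) / (2 * real k))"
      using pt nn S by (intro mult_left_mono) auto
    then show "\<theta> S * real (min (card S) k) \<le> 3/2 * (\<theta> S * real (card S)) - (\<theta> S * (real (card S) * real (card S))) / (2 * real k)"
      by (simp add: algebra_simps)
  qed
  also have "\<dots> = 3/2 * (\<Sum>S\<in>Pow {1..n}. \<theta> S * real (card S)) - (\<Sum>S\<in>Pow {1..n}. \<theta> S * (real (card S) * real (card S))) / (2 * real k)"
    by (simp add: sum_subtractf sum_distrib_left sum_divide_distrib)
  also have "\<dots> = real k - 1/4"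
    unfolding marg_card[OF mf] pw_card2[OF pw] unfolding n using kp by (simp add: field_simps power2_eq_square)
  finally show ?thesis .
qed


lemma cc_ge:
  assumes "marg_feasible n (\<lambda>_. x) \<theta>"
  shows "(\<Sum>S\<in>Pow {1..n}. \<theta> S * real (min (card S) k)) \<le> concave_closure n (\<lambda>S. real (min (card S) k)) (\<lambda>_. x)"
  unfolding concave_closure_def by (rule cSup_upper) (use assms bdd_marg in auto)

lemma pw_ge:
  assumes "pw_feasible n (\<lambda>_. x) \<theta>"
  shows "(\<Sum>S\<in>Pow {1..n}. \<theta> S * real (min (card S) k)) \<le> upper_pw_ext n (\<lambda>S. real (min (card S) k)) (\<lambda>_. x)"
  unfolding upper_pw_ext_def by (rule cSup_upper) (use assms bdd_pw in auto)

lemma cc_le: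
  assumes "marg_feasible n (\<lambda>_. x) \<theta>0"
  shows "concave_closure n (\<lambda>S. real (min (card S) k)) (\<lambda>_. x) \<le> min (real n * x) (real k)"
  unfolding concave_closure_def by (rule cSup_least) (use assms marg_value_le in auto)

lemma pw_le_cc:
  assumes "pw_feasible n (\<lambda>_. x) \<theta>0"
  shows "upper_pw_ext n (\<lambda>S. real (min (card S) k)) (\<lambda>_. x) \<le> concave_closure n (\<lambda>S. real (min (card S) k)) (\<lambda>_. x)"
  unfolding upper_pw_ext_def concave_closure_def
  by (rule cSup_subset_mono) (use assms bdd_marg in \<open>auto simp: pw_feasible_def\<close>)

lemma pw_le_eq:
  assumes "k \<ge> 1" "n = 2 * k" "pw_feasible n (\<lambda>_. 1/2) \<theta>0"
  shows "upper_pw_ext n (\<lambda>S. real (min (card S) k)) (\<lambda>_. 1/2) \<le> real k - 1/4"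
  unfolding upper_pw_ext_def by (rule cSup_least) (use assms eq_upper in auto)


theorem mainTheorem14:
  fixes n k :: nat
  assumes "1 \<le> n" and "1 \<le> k" and "k \<le> n"
  defines "f \<equiv> (\<lambda>S::nat set. real (min (card S) k))"
  shows "(\<forall>x::real\<in>{0..1}.
            ratio (concave_closure n f (\<lambda>_. x)) (upper_pw_ext n f (\<lambda>_. x))
              \<le> 4 * real k / (4 * real k - 1))
       \<and> (even n \<and> k = n div 2 \<longrightarrow>
            ratio (concave_closure n f (\<lambda>_. 1/2)) (upper_pw_ext n f (\<lambda>_. 1/2))
              = 4 * real k / (4 * real k - 1))"
proof (intro conjI ballI impI)
  have kp: "real k \<ge> 1" using assms by simp
  have cpos: "1 - 1 / (4 * real k) > 0" using kp by (simp add: field_simps)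
  have cinv: "1 / (1 - 1 / (4 * real k)) = 4 * real k / (4 * real k - 1)" using kp by (simp add: field_simps)
  {
    fix x :: real assume x: "x \<in> {0..1}"
    define a where "a = concave_closure n f (\<lambda>_. x)"
    define b where "b = upper_pw_ext n f (\<lambda>_. x)"
    define U where "U = min (real n * x) (real k)"
    obtain \<theta> where th: "pw_feasible n (\<lambda>_. x) \<theta>"
      and tv: "(\<Sum>S\<in>Pow {1..n}. \<theta> S * real (min (card S) k)) \<ge> (1 - 1 / (4 * real k)) * U"
      using pw_lower[OF assms(1-3), of x] x unfolding U_def by auto
    have mf: "marg_feasible n (\<lambda>_. x) \<theta>" using th unfolding pw_feasible_def by simp
    have bl: "b \<ge> (1 - 1 / (4 * real k)) * U" using pw_ge[OF th, of k] tv unfolding b_def f_def by simp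
    have au: "a \<le> U" using cc_le[OF mf, of k] unfolding a_def f_def U_def by simp
    have ba: "b \<le> a" using pw_le_cc[OF th, of k] unfolding a_def b_def f_def by simp
    show "ratio (concave_closure n f (\<lambda>_. x)) (upper_pw_ext n f (\<lambda>_. x)) \<le> 4 * real k / (4 * real k - 1)"
      unfolding a_def[symmetric] b_def[symmetric]
    proof (cases "x = 0")
      case True
      then have "U = 0" unfolding U_def by simp
      then have "a = 0" "b = 0" using bl au ba by auto
      then show "ratio a b \<le> 4 * real k / (4 * real k - 1)" unfolding ratio_def using kp by (simp add: field_simps)
    next
      case False
      then have "U > 0" using x assms unfolding U_def by auto
      then have cU: "(1 - 1 / (4 * real k)) * U > 0" using cpos by simp
      then have bp: "b > 0" using bl by linarith
      have "ratio a b = a / b" unfolding ratio_def using bp by simp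
      also have "\<dots> \<le> U / b" using au bp by (simp add: divide_right_mono)
      also have "\<dots> \<le> U / ((1 - 1 / (4 * real k)) * U)"
        using bl cU \<open>U > 0\<close> by (intro divide_left_mono) auto
      also have "\<dots> = 1 / (1 - 1 / (4 * real k))" using \<open>U > 0\<close> by simp
      finally show "ratio a b \<le> 4 * real k / (4 * real k - 1)" using cinv by simp
    qed
  }
next
  assume ev: "even n \<and> k = n div 2"
  then have n2: "n = 2 * k" by auto
  define a where "a = concave_closure n f (\<lambda>_. 1/2)"
  define b where "b = upper_pw_ext n f (\<lambda>_. 1/2)"
  have kp: "real k \<ge> 1" using assms by simp
  obtain \<theta> where th: "pw_feasible n (\<lambda>_. 1/2) \<theta>"
    and tv: "(\<Sum>S\<in>Pow {1..n}. \<theta> S * real (min (card S) k)) \<ge> (1 - 1 / (4 * real k)) * min (real n * (1/2)) (real k)"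
    using pw_lower[OF assms(1-3), of "1/2"] by auto
  have mf: "marg_feasible n (\<lambda>_. 1/2) \<theta>" using th unfolding pw_feasible_def by simp
  have U: "min (real n * (1/2)) (real k) = real k" using n2 by simp
  have bl: "b \<ge> real k - 1/4" using pw_ge[OF th, of k] tv kp unfolding b_def f_def U
    by (simp add: algebra_simps)
  have bu: "b \<le> real k - 1/4" using pw_le_eq[OF assms(2) n2 th] unfolding b_def f_def by simp
  have au: "a \<le> real k" using cc_le[OF mf, of k] unfolding a_def f_def U by simp
  have km: "k \<le> n" using assms by simp
  have mk: "marg_feasible n (\<lambda>_. 1/2) (thetaP n (pt k))"
  proof (rule sizes_marg)
    show "\<forall>m\<le>n. pt k m \<ge> 0" by (simp add: pt_def)
    show "(\<Sum>m\<le>n. pt k m) = 1" using sum_pt1[OF km, of "\<lambda>_. 1"] by simp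
    show "(\<Sum>m\<le>n. pt k m * real m) = real n * (1/2)" using sum_pt1[OF km, of real] n2 by simp
    show "1 \<le> n" using assms by simp
  qed
  have "(\<Sum>S\<in>Pow {1..n}. thetaP n (pt k) S * real (min (card S) k)) = real k"
    unfolding sizes_value using sum_pt1[OF km, of "\<lambda>m. real (min m k)"] by simp
  then have al: "a \<ge> real k" using cc_ge[OF mk, of k] unfolding a_def f_def by simp
  have ab: "a = real k" "b = real k - 1/4" using al au bl bu by auto
  have "ratio a b = real k / (real k - 1/4)" unfolding ratio_def ab using kp by simp
  also have "\<dots> = 4 * real k / (4 * real k - 1)" using kp by (simp add: field_simps)
  finally show "ratio (concave_closure n f (\<lambda>_. 1/2)) (upper_pw_ext n f (\<lambda>_. 1/2)) = 4 * real k / (4 * real k - 1)"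
    unfolding a_def[symmetric] b_def[symmetric] .
qed

end
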